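(* A sequence $a=(a_1,\dots,a_d)\in\mathbb{R}^d$ is a Nuij sequence with a universal determinantal representation if and only if there exist $\alpha,\beta\in\mathbb{R}$ such that $$a_i=\frac{1}{i!}\,t_{\alpha,\beta}(i)=\frac{1}{i!}(\alpha-\beta)^{i-1}\big(\alpha+(i-1)\beta\big),\qquad i=1,\dots,d.$$
   Context: A polynomial in $\mathbb{R}[z]$ is hyperbolic if all its roots are real. A sequence $a\in\mathbb{R}^d$ is a Nuij sequence if for every hyperbolic $p\in\mathbb{R}[z]$ of degree $d$, $p_a(z,s):=p(z)+\sum_{k=1}^d a_k s^k p^{(k)}(z)$ is hyperbolic for all $s\in\mathbb{R}$. A Nuij sequence $a$ admits a universal determinantal representation if there exists a real symmetric $d\times d$ matrix $A_a$ such that for every monic hyperbolic polynomial $p(z)=(z+\lambda_1)\cdots(z+\lambda_d)$ of degree $d$ one has $p_a(z,s)=\det(zI+D+sA_a)$, where $D$ is the diagonal matrix with diagonal entries $\lambda_1,\dots,\lambda_d$ in an arbitrary order. For $\alpha,\beta\in\mathbb{R}$ and $i\ge1$, $t_{\alpha,\beta}(i)$ denotes the determinant of the $i\times i$ matrix with all diagonal entries $\alpha$ and all off-diagonal entries $\beta$, which equals $(\alpha-\beta)^{i-1}(\alpha+(i-1)\beta)$. *)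

theory Defs
  imports "Jordan_Normal_Form.Determinant" "HOL-Computational_Algebra.Polynomial"
begin

definition hyperbolic :: "real poly \<Rightarrow> bool" where
  "hyperbolic p \<longleftrightarrow> (\<forall>z::complex. poly (map_poly complex_of_real p) z = 0 \<longrightarrow> z \<in> \<real>)"

text \<open>p_a(z,s) for fixed s, as a polynomial in z; the sequence a is indexed by 1..d.\<close>
definition nuij_pert :: "nat \<Rightarrow> (nat \<Rightarrow> real) \<Rightarrow> real poly \<Rightarrow> real \<Rightarrow> real poly" where
  "nuij_pert d a p s = p + (\<Sum>k=1..d. smult (a k * s ^ k) ((pderiv ^^ k) p))"

definition nuij_seq :: "nat \<Rightarrow> (nat \<Rightarrow> real) \<Rightarrow> bool" where
  "nuij_seq d a \<longleftrightarrow>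
     (\<forall>p. degree p = d \<and> hyperbolic p \<longrightarrow> (\<forall>s. hyperbolic (nuij_pert d a p s)))"

text \<open>Universal determinantal representation: a real symmetric d x d matrix A with
  p_a(z,s) = det(zI + D + sA) for every monic hyperbolic p = prod (z + lambda_i),
  D = diag(lambda_1..lambda_d) in any order (we quantify over all tuples lambda).\<close>
definition univ_det_rep :: "nat \<Rightarrow> (nat \<Rightarrow> real) \<Rightarrow> bool" where
  "univ_det_rep d a \<longleftrightarrow>
     (\<exists>A \<in> carrier_mat d d. transpose_mat A = A \<and>
        (\<forall>lam :: nat \<Rightarrow> real. \<forall>z s.
           poly (nuij_pert d a (\<Prod>i<d. [:lam i, 1:]) s) z =
           det (z \<cdot>\<^sub>m 1\<^sub>m d + mat d d (\<lambda>(i,j). if i = j then lam i else 0) + s \<cdot>\<^sub>m A)))"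

definition t_ab :: "real \<Rightarrow> real \<Rightarrow> nat \<Rightarrow> real" where
  "t_ab \<alpha> \<beta> i = det (mat i i (\<lambda>(j,k). if j = k then \<alpha> else \<beta>))"

end

theory Submission
  imports Defs "Jordan_Normal_Form.Char_Poly"
begin



lemma det_rowN_lower:
  fixes w :: "nat \<Rightarrow> 'a::comm_ring_1"
  shows "det (mat (Suc n) (Suc n) (\<lambda>(i,j). if i = n then 1 else (if i = j then w i else 0) + c))
       = (\<Prod>i<n. w i)"
proof -
  define N where "N m = mat (Suc n) (Suc n) (\<lambda>(i,j). if i = n then 1 else
      (if i = j then w i else 0) + (if i < m then 0 else c))" for m
  have step: "det (N (Suc m)) = det (N m)" if "m < n" for m
  proof -
    have "N (Suc m) = addrow (-c) m n (N m)"
      by (rule eq_matI, insert that, auto simp: N_def mat_addrow_def)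
    moreover have "det (addrow (-c) m n (N m)) = det (N m)"
      by (rule det_addrow[of _ "Suc n"], insert that, auto simp: N_def)
    ultimately show ?thesis by simp
  qed
  have all: "m \<le> n \<Longrightarrow> det (N m) = det (N 0)" for m
    by (induction m) (auto simp: step)
  have "det (N n) = prod_list (diag_mat (N n))"
    by (rule det_lower_triangular[of "Suc n"], auto simp: N_def)
  also have "\<dots> = (\<Prod>i<n. w i)"
    unfolding prod_list_diag_prod by (simp add: N_def atLeast0LessThan lessThan_Suc)
  finally have "det (N 0) = (\<Prod>i<n. w i)" using all[of n] by simp
  moreover have "N 0 = mat (Suc n) (Suc n) (\<lambda>(i,j). if i = n then 1 else (if i = j then w i else 0) + c)"
    by (rule eq_matI, auto simp: N_def)
  ultimately show ?thesis by simp
qed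

lemma det_diag_plus_const:
  fixes w :: "nat \<Rightarrow> 'a::comm_ring_1"
  shows "det (mat n n (\<lambda>(i,j). (if i = j then w i else 0) + c))
     = (\<Prod>i<n. w i) + c * (\<Sum>i<n. \<Prod>j\<in>{..<n}-{i}. w j)"
proof (induction n)
  case 0
  then show ?case by (simp add: det_def)
next
  case (Suc n)
  define M where "M = mat (Suc n) (Suc n) (\<lambda>(i,j). (if i = j then w i else 0) + c)"
  define N where "N = mat (Suc n) (Suc n) (\<lambda>(i,j). if i = n then 1 else (if i = j then w i else 0) + c)"
  have MC: "M \<in> carrier_mat (Suc n) (Suc n)" and NC: "N \<in> carrier_mat (Suc n) (Suc n)"
    by (auto simp: M_def N_def)
  have "det M = (\<Sum>j<Suc n. M $$ (n,j) * cofactor M n j)"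
    by (rule laplace_expansion_row[OF MC], simp)
  also have "\<dots> = (\<Sum>j<Suc n. ((if n = j then w n else 0) + c) * cofactor M n j)"
    by (rule sum.cong, auto simp: M_def)
  also have "\<dots> = w n * cofactor M n n + c * (\<Sum>j<Suc n. cofactor M n j)"
    by (simp add: distrib_right distrib_left sum.distrib sum_distrib_left)
  also have "cofactor M n n = det (mat n n (\<lambda>(i,j). (if i = j then w i else 0) + c))"
  proof -
    have "mat_delete M n n = mat n n (\<lambda>(i,j). (if i = j then w i else 0) + c)"
      by (rule eq_matI, auto simp: M_def mat_delete_def)
    then show ?thesis by (simp add: cofactor_def)
  qed
  also have "(\<Sum>j<Suc n. cofactor M n j) = det N"
  proof -
    have "det N = (\<Sum>j<Suc n. N $$ (n,j) * cofactor N n j)"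
      by (rule laplace_expansion_row[OF NC], simp)
    also have "\<dots> = (\<Sum>j<Suc n. cofactor M n j)"
    proof (rule sum.cong[OF refl])
      fix j assume "j \<in> {..<Suc n}"
      have "mat_delete N n j = mat_delete M n j"
        by (rule eq_matI, auto simp: M_def N_def mat_delete_def)
      then show "N $$ (n,j) * cofactor N n j = cofactor M n j"
        using \<open>j \<in> _\<close> by (simp add: cofactor_def N_def)
    qed
    finally show ?thesis by simp
  qed
  also have "det N = (\<Prod>i<n. w i)" unfolding N_def by (rule det_rowN_lower)
  finally have eq: "det M = w n * ((\<Prod>i<n. w i) + c * (\<Sum>i<n. \<Prod>j\<in>{..<n}-{i}. w j)) + c * (\<Prod>i<n. w i)"
    using Suc by simp
  have ins: "\<And>i. i < n \<Longrightarrow> {..<Suc n} - {i} = insert n ({..<n} - {i})" by auto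
  have "(\<Sum>i<Suc n. \<Prod>j\<in>{..<Suc n}-{i}. w j) = (\<Sum>i<n. w n * (\<Prod>j\<in>{..<n}-{i}. w j)) + (\<Prod>i<n. w i)"
  proof -
    have "(\<Sum>i<n. \<Prod>j\<in>{..<Suc n}-{i}. w j) = (\<Sum>i<n. w n * (\<Prod>j\<in>{..<n}-{i}. w j))"
      by (rule sum.cong[OF refl], subst ins, auto)
    moreover have "{..<Suc n} - {n} = {..<n}" by auto
    ultimately show ?thesis by simp
  qed
  then show ?case using eq unfolding M_def
    by (simp add: algebra_simps sum_distrib_left lessThan_Suc)
qed




lemma degree_pderiv_pow: "degree ((pderiv ^^ k) (p::real poly)) = degree p - k"
  by (induction k) (auto simp: degree_pderiv)

lemma pderiv_pow_zero: "degree (p::real poly) < k \<Longrightarrow> (pderiv ^^ k) p = 0"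
proof -
  assume "degree p < k"
  then obtain m where k: "k = Suc m" and "degree p \<le> m" by (cases k) auto
  then have "degree ((pderiv ^^ m) p) = 0" by (simp add: degree_pderiv_pow)
  then show ?thesis using k by (simp add: pderiv_eq_0_iff)
qed

lemma taylor_poly:
  fixes p :: "real poly"
  assumes "degree p \<le> d"
  shows "poly p (z + h) = (\<Sum>k\<le>d. poly ((pderiv ^^ k) p) z * h ^ k / fact k)"
proof -
  define diff where "diff m x = poly ((pderiv ^^ m) p) (z + x)" for m x
  have D: "\<forall>m x. DERIV (diff m) x :> diff (Suc m) x"
  proof (intro allI)
    fix m x
    show "DERIV (diff m) x :> diff (Suc m) x"
      unfolding diff_def by (auto intro!: derivative_eq_intros)
  qed
  have D0: "diff 0 = (\<lambda>x. poly p (z + x))" by (rule ext) (simp add: diff_def)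
  from Maclaurin_all_le[OF D0 D, of h "Suc d"]
  obtain t where "poly p (z + h) = (\<Sum>m<Suc d. diff m 0 / fact m * h ^ m) + diff (Suc d) t / fact (Suc d) * h ^ Suc d"
    by blast
  moreover have "diff (Suc d) t = 0" unfolding diff_def using assms
    by (subst pderiv_pow_zero) auto
  ultimately show ?thesis by (simp add: diff_def lessThan_Suc_atMost)
qed

lemma aux_alg: "(F::real) \<noteq> 0 \<Longrightarrow> (r::real) + 1 \<noteq> 0 \<Longrightarrow> g^m*(g + (r+1)*\<beta>)/((r+1)*F) * s^(Suc m) = (s*g)^Suc m/((r+1)*F) + s*\<beta>*((s*g)^m/F)"
proof -
  assume a: "F \<noteq> 0" "r + 1 \<noteq> 0"
  have "g^m*(g + (r+1)*\<beta>)/((r+1)*F) = g^m*g/((r+1)*F) + g^m*\<beta>/F"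
    using a by (simp add: distrib_left add_divide_distrib)
  then show ?thesis by (simp add: algebra_simps power_mult_distrib)
qed

lemma pert_eval:
  fixes p :: "real poly"
  assumes deg: "degree p \<le> d"
    and a: "\<forall>i\<in>{1..d}. a i = (\<alpha> - \<beta>) ^ (i - 1) * (\<alpha> + (real i - 1) * \<beta>) / fact i"
  shows "poly (nuij_pert d a p s) z = poly p (z + s*(\<alpha>-\<beta>)) + s*\<beta> * poly (pderiv p) (z + s*(\<alpha>-\<beta>))"
proof -
  define g where "g = \<alpha> - \<beta>"
  define h where "h = s * g"
  define P where "P k = poly ((pderiv ^^ k) p) z" for k
  have ak: "a k * s ^ k = h ^ k / fact k + s * \<beta> * (h ^ (k - 1) / fact (k - 1))" if kd: "k \<in> {1..d}" for k
  proof -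
    obtain m where k: "k = Suc m" using kd by (cases k) auto
    have "a k * s ^ k = g ^ m * (g + real (Suc m) * \<beta>) / fact (Suc m) * s ^ Suc m"
      using a kd k by (simp add: g_def algebra_simps)
    also have "\<dots> = h ^ Suc m / fact (Suc m) + s * \<beta> * (h ^ m / fact m)"
    proof -
      have F: "(fact (Suc m)::real) = (real m + 1) * fact m" by simp
      have F0: "(fact m::real) \<noteq> 0" "real m + 1 \<noteq> 0" by auto
      show ?thesis unfolding F of_nat_Suc h_def using aux_alg[OF F0, where g=g and s=s and m=m and \<beta>=\<beta>] by (simp add: add.commute)
    qed
    finally show ?thesis using k by simp
  qed
  have "poly (nuij_pert d a p s) z = P 0 + (\<Sum>k=1..d. a k * s ^ k * P k)"
    by (simp add: nuij_pert_def poly_sum P_def)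
  also have "\<dots> = P 0 + (\<Sum>k=1..d. h ^ k / fact k * P k) + s * \<beta> * (\<Sum>k=1..d. h ^ (k - 1) / fact (k - 1) * P k)"
  proof -
    have "(\<Sum>k=1..d. a k * s ^ k * P k) = (\<Sum>k=1..d. h ^ k / fact k * P k + s * \<beta> * (h ^ (k - 1) / fact (k - 1) * P k))"
    proof (rule sum.cong[OF refl])
      fix k assume "k \<in> {1..d}"
      then show "a k * s ^ k * P k = h ^ k / fact k * P k + s * \<beta> * (h ^ (k - 1) / fact (k - 1) * P k)"
        by (simp only: ak distrib_right mult.assoc)
    qed
    then show ?thesis by (simp add: sum.distrib sum_distrib_left)
  qed
  also have "P 0 + (\<Sum>k=1..d. h ^ k / fact k * P k) = (\<Sum>k\<le>d. P k * h ^ k / fact k)"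
  proof -
    have "(\<Sum>k\<le>d. P k * h ^ k / fact k) = P 0 + (\<Sum>k=1..d. P k * h ^ k / fact k)"
      by (simp add: atMost_atLeast0 sum.atLeast_Suc_atMost)
    then show ?thesis by (simp add: mult.commute)
  qed
  also have "\<dots> = poly p (z + h)" unfolding P_def by (rule taylor_poly[OF deg, symmetric])
  also have "(\<Sum>k=1..d. h ^ (k - 1) / fact (k - 1) * P k) = poly (pderiv p) (z + h)"
  proof -
    have dp: "degree (pderiv p) \<le> d" using deg by (simp add: degree_pderiv)
    have "poly (pderiv p) (z + h) = (\<Sum>k\<le>d. poly ((pderiv ^^ k) (pderiv p)) z * h ^ k / fact k)"
      by (rule taylor_poly[OF dp])
    also have "\<dots> = (\<Sum>k\<le>d. P (Suc k) * h ^ k / fact k)"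
      by (simp add: P_def funpow_swap1)
    also have "\<dots> = (\<Sum>k<d. P (Suc k) * h ^ k / fact k)"
    proof -
      have "P (Suc d) = 0" unfolding P_def using deg by (subst pderiv_pow_zero) auto
      then show ?thesis by (simp add: lessThan_Suc_atMost[symmetric])
    qed
    also have "\<dots> = (\<Sum>k=1..d. h ^ (k - 1) / fact (k - 1) * P k)"
    proof (cases d)
      case 0 then show ?thesis by simp
    next
      case (Suc e)
      have "(\<Sum>k=1..d. h ^ (k - 1) / fact (k - 1) * P k) = (\<Sum>k=0..e. h ^ k / fact k * P (Suc k))"
        unfolding Suc One_nat_def sum.shift_bounds_cl_Suc_ivl by simp
      also have "\<dots> = (\<Sum>k<d. P (Suc k) * h ^ k / fact k)"
        unfolding Suc by (simp add: atLeast0AtMost lessThan_Suc_atMost mult.commute)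
      finally show ?thesis by simp
    qed
    finally show ?thesis by simp
  qed
  finally show ?thesis by (simp add: h_def g_def)
qed

lemma pert_poly:
  fixes p :: "real poly"
  assumes deg: "degree p \<le> d"
    and a: "\<forall>i\<in>{1..d}. a i = (\<alpha> - \<beta>) ^ (i - 1) * (\<alpha> + (real i - 1) * \<beta>) / fact i"
  shows "nuij_pert d a p s = pcompose p [:s*(\<alpha>-\<beta>), 1:] + smult (s*\<beta>) (pcompose (pderiv p) [:s*(\<alpha>-\<beta>), 1:])"
  by (rule poly_eq_poly_eq_iff[THEN iffD1], rule ext)
     (simp add: pert_eval[OF deg a] poly_pcompose algebra_simps)




lemma logderiv:
  fixes as :: "complex list"
  shows "poly (\<Prod>a\<leftarrow>as. [:-a,1:]) u \<noteq> 0 \<Longrightarrow>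
    poly (pderiv (\<Prod>a\<leftarrow>as. [:-a,1:])) u = poly (\<Prod>a\<leftarrow>as. [:-a,1:]) u * (\<Sum>a\<leftarrow>as. 1/(u - a))"
proof (induction as)
  case Nil
  then show ?case by simp
next
  case (Cons a as)
  let ?Q = "\<Prod>a\<leftarrow>as. [:-a,1:]"
  have ua: "u - a \<noteq> 0" and Q: "poly ?Q u \<noteq> 0" using Cons.prems by auto
  have pr: "(\<Prod>a\<leftarrow>a # as. [:-a,1:]) = [:-a,1:] * ?Q" by simp
  have pd1: "pderiv [:-a,1:] = (1 :: complex poly)" by (simp add: pderiv_pCons)
  have e: "pderiv ([:-a,1:] * ?Q) = [:-a,1:] * pderiv ?Q + ?Q"
    by (simp only: pderiv_mult pd1 mult_1_right)
  have "poly (pderiv (\<Prod>a\<leftarrow>a # as. [:-a,1:])) u = (u - a) * poly (pderiv ?Q) u + poly ?Q u"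
    unfolding pr e poly_add poly_mult by simp
  also have "\<dots> = (u - a) * poly ?Q u * (1/(u - a) + (\<Sum>a\<leftarrow>as. 1/(u - a)))"
    using Cons.IH[OF Q] ua by (simp add: field_simps)
  finally show ?case by (simp add: algebra_simps)
qed

lemma im_sum_neg:
  fixes as :: "complex list"
  assumes "\<forall>a\<in>set as. Im a = 0" "Im u \<noteq> 0" "as \<noteq> []"
  shows "Im (\<Sum>a\<leftarrow>as. 1/(u - a)) * Im u < 0"
  using assms
proof (induction as)
  case Nil then show ?case by simp
next
  case (Cons a as)
  have t: "Im (1/(u - a)) * Im u < 0"
  proof -
    have "Im (1/(u-a)) = - Im u / ((Re (u-a))\<^sup>2 + (Im u)\<^sup>2)"
      using Cons.prems by (simp add: inverse_eq_divide[symmetric])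
    moreover have D: "(Re (u-a))\<^sup>2 + (Im u)\<^sup>2 > 0" using Cons.prems
      by (simp add: add_nonneg_pos)
    moreover have "(Im u)\<^sup>2 > 0" using Cons.prems by simp
    ultimately have "Im (1/(u-a)) * Im u = - ((Im u)\<^sup>2 / ((Re (u-a))\<^sup>2 + (Im u)\<^sup>2))"
      by (simp add: power2_eq_square)
    moreover have "(Im u)\<^sup>2 / ((Re (u-a))\<^sup>2 + (Im u)\<^sup>2) > 0"
      using D \<open>(Im u)\<^sup>2 > 0\<close> by simp
    ultimately show ?thesis by linarith
  qed
  show ?case
  proof (cases "as = []")
    case True then show ?thesis using t by simp
  next
    case False
    then have "Im (\<Sum>a\<leftarrow>as. 1/(u - a)) * Im u < 0" using Cons by auto
    then show ?thesis using t by (simp add: distrib_right)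
  qed
qed

lemma hyperbolic_nonzero: "hyperbolic p \<Longrightarrow> p \<noteq> 0"
  unfolding hyperbolic_def
proof
  assume "\<forall>z. poly (map_poly complex_of_real p) z = 0 \<longrightarrow> z \<in> \<real>" "p = 0"
  then have "\<i> \<in> \<real>" by auto
  then show False by (simp add: complex_is_Real_iff)
qed

lemma hyp_perturb:
  fixes p :: "real poly"
  assumes hyp: "hyperbolic p"
  shows "hyperbolic (pcompose p [:h,1:] + smult c (pcompose (pderiv p) [:h,1:]))"
  unfolding hyperbolic_def
proof (intro allI impI)
  fix w :: complex
  define P where "P = map_poly complex_of_real p"
  define u where "u = w + of_real h"
  assume "poly (map_poly complex_of_real (pcompose p [:h,1:] + smult c (pcompose (pderiv p) [:h,1:]))) w = 0"
  then have eq: "poly P u + of_real c * poly (pderiv P) u = 0"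
    by (simp add: of_real_hom.map_poly_hom_add of_real_hom.map_poly_hom_smult
        of_real_hom.map_poly_pcompose of_real_hom.map_poly_pderiv[symmetric] poly_pcompose P_def u_def
        algebra_simps)
  have roots: "\<And>x. poly P x = 0 \<Longrightarrow> x \<in> \<real>" using hyp unfolding hyperbolic_def P_def by auto
  have "p \<noteq> 0" using hyperbolic_nonzero[OF hyp] .
  then have P0: "P \<noteq> 0" by (simp add: P_def)
  from fundamental_theorem_algebra_factorized[of P] obtain as where
    fac: "smult (lead_coeff P) (\<Prod>a\<leftarrow>as. [:- a, 1:]) = P" by blast
  define Q where "Q = (\<Prod>a\<leftarrow>as. [:- a, 1:])"
  define l where "l = lead_coeff P"
  have l0: "l \<noteq> 0" using P0 by (simp add: l_def)
  have PQ: "P = smult l Q" using fac by (simp add: Q_def l_def)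
  have realas: "\<forall>a\<in>set as. Im a = 0"
  proof
    fix a assume "a \<in> set as"
    then have "poly Q a = 0" unfolding Q_def
      by (induction as) auto
    then have "poly P a = 0" by (simp add: PQ)
    then show "Im a = 0" using roots complex_is_Real_iff by blast
  qed
  show "w \<in> \<real>"
  proof (rule ccontr)
    assume "w \<notin> \<real>"
    then have Imu: "Im u \<noteq> 0" by (simp add: u_def complex_is_Real_iff)
    have "poly P u \<noteq> 0"
    proof
      assume "poly P u = 0"
      then have "u \<in> \<real>" by (rule roots)
      then show False using Imu complex_is_Real_iff by blast
    qed
    then have Qu: "poly Q u \<noteq> 0" by (simp add: PQ)
    define S where "S = (\<Sum>a\<leftarrow>as. 1/(u - a))"
    have "l * poly Q u * (1 + of_real c * S) = 0"
      using eq logderiv[OF Qu[unfolded Q_def]] unfolding PQ S_def Q_def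
      by (simp add: algebra_simps pderiv_smult)
    then have S1: "1 + of_real c * S = 0" using l0 Qu by simp
    have "as \<noteq> []"
    proof
      assume "as = []"
      then have "S = 0" by (simp add: S_def)
      then show False using S1 by simp
    qed
    then have neg: "Im S * Im u < 0" unfolding S_def by (rule im_sum_neg[OF realas Imu])
    have "Im (1 + of_real c * S) = 0" using S1 by simp
    then have "c * Im S = 0" by simp
    moreover have "c \<noteq> 0" using S1 by (auto)
    ultimately have "Im S = 0" by simp
    then show False using neg by simp
  qed
qed




lemma t_ab_closed:
  assumes "1 \<le> i"
  shows "t_ab \<alpha> \<beta> i = (\<alpha>-\<beta>)^(i-1) * (\<alpha> + (real i - 1)*\<beta>)"
proof -
  obtain m where i: "i = Suc m" using assms by (cases i) auto
  have "t_ab \<alpha> \<beta> i = det (mat i i (\<lambda>(j,k). (if j = k then (\<lambda>_. \<alpha>-\<beta>) j else 0) + \<beta>))"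
    unfolding t_ab_def by (rule arg_cong[of _ _ det], rule eq_matI, auto)
  also have "\<dots> = (\<alpha>-\<beta>)^i + \<beta> * (real i * (\<alpha>-\<beta>)^(i-1))"
  proof -
    have "\<And>j. j < i \<Longrightarrow> card ({..<i} - {j}) = i - 1" by simp
    then show ?thesis by (subst det_diag_plus_const) simp
  qed
  also have "\<dots> = (\<alpha>-\<beta>)^(i-1) * (\<alpha> + (real i - 1)*\<beta>)"
    unfolding i by (simp add: algebra_simps)
  finally show ?thesis .
qed

lemma poly_prod_lin: "poly (\<Prod>i<d. [:lam i, 1:]) x = (\<Prod>i<d. lam i + x)"
  by (simp add: poly_prod)

lemma poly_pderiv_prod_lin: "poly (pderiv (\<Prod>i<d. [:lam i, 1:])) x = (\<Sum>i<d. \<Prod>j\<in>{..<d}-{i}. lam j + x)"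
  by (simp add: pderiv_prod pderiv_pCons poly_sum poly_prod)

lemma degree_prod_lin: "degree (\<Prod>i<d. [:lam i, 1::real:]) \<le> d"
proof -
  have "degree (\<Prod>i<d. [:lam i, 1::real:]) \<le> (\<Sum>i<d. degree [:lam i, 1::real:])"
    using degree_prod_sum_le[of "{..<d}" "\<lambda>i. [:lam i, 1::real:]"] by (simp add: o_def)
  also have "\<dots> = d" by simp
  finally show ?thesis .
qed

lemma backward:
  assumes a: "\<forall>i\<in>{1..d}. a i = (\<alpha>-\<beta>)^(i-1) * (\<alpha> + (real i - 1)*\<beta>) / fact i"
  shows "nuij_seq d a \<and> univ_det_rep d a"
proof
  show "nuij_seq d a"
    unfolding nuij_seq_def
  proof (intro allI impI)
    fix p :: "real poly" and s :: real
    assume "degree p = d \<and> hyperbolic p"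
    then have dp: "degree p \<le> d" and hp: "hyperbolic p" by auto
    show "hyperbolic (nuij_pert d a p s)"
      unfolding pert_poly[OF dp a] by (rule hyp_perturb[OF hp])
  qed
next
  define A where "A = mat d d (\<lambda>(i,j). if i = j then \<alpha> else \<beta>)"
  show "univ_det_rep d a"
    unfolding univ_det_rep_def
  proof (intro bexI[of _ A] conjI allI)
    show "A \<in> carrier_mat d d" by (simp add: A_def)
    show "transpose_mat A = A" by (rule eq_matI, auto simp: A_def)
    fix lam :: "nat \<Rightarrow> real" and z s :: real
    define h where "h = s * (\<alpha> - \<beta>)"
    have "poly (nuij_pert d a (\<Prod>i<d. [:lam i, 1:]) s) z
        = (\<Prod>i<d. lam i + (z + h)) + s * \<beta> * (\<Sum>i<d. \<Prod>j\<in>{..<d}-{i}. lam j + (z + h))"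
      unfolding pert_eval[OF degree_prod_lin a] h_def poly_prod_lin poly_pderiv_prod_lin ..
    also have "\<dots> = det (mat d d (\<lambda>(i,j). (if i = j then (\<lambda>i. z + lam i + h) i else 0) + s * \<beta>))"
      by (subst det_diag_plus_const) (simp add: algebra_simps)
    also have "mat d d (\<lambda>(i,j). (if i = j then (\<lambda>i. z + lam i + h) i else 0) + s * \<beta>)
       = z \<cdot>\<^sub>m 1\<^sub>m d + mat d d (\<lambda>(i, j). if i = j then lam i else 0) + s \<cdot>\<^sub>m A"
      by (rule eq_matI, auto simp: A_def h_def algebra_simps)
    finally show "poly (nuij_pert d a (\<Prod>i<d. [:lam i, 1:]) s) z =
        det (z \<cdot>\<^sub>m 1\<^sub>m d + mat d d (\<lambda>(i, j). if i = j then lam i else 0) + s \<cdot>\<^sub>m A)" .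
  qed
qed




lemma det_mat_explicit:
  "det (mat n n f) = (\<Sum>p\<in>{p. p permutes {0..<n}}. of_int (sign p) * (\<Prod>i=0..<n. f (i, p i)))"
proof -
  have "det (mat n n f) = (\<Sum>p\<in>{p. p permutes {0..<n}}. of_int (sign p) * (\<Prod>i=0..<n. mat n n f $$ (i, p i)))"
    by (rule det_def') simp
  also have "\<dots> = (\<Sum>p\<in>{p. p permutes {0..<n}}. of_int (sign p) * (\<Prod>i=0..<n. f (i, p i)))"
  proof (rule sum.cong[OF refl])
    fix p assume "p \<in> {p. p permutes {0..<n}}"
    then have "\<And>i. i < n \<Longrightarrow> p i < n" using permutes_in_image by fastforce
    then show "of_int (sign p) * (\<Prod>i=0..<n. mat n n f $$ (i, p i)) = of_int (sign p) * (\<Prod>i=0..<n. f (i, p i))"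
      by (intro arg_cong[of _ _ "\<lambda>x. _ * x"] prod.cong) auto
  qed
  finally show ?thesis .
qed

lemma det_sign_scale:
  fixes g :: "nat \<times> nat \<Rightarrow> 'a::comm_ring_1"
  shows "det (mat n n (\<lambda>(i,j). \<sigma> i * \<sigma> j * g (i,j))) = (\<Prod>i=0..<n. \<sigma> i)^2 * det (mat n n g)"
proof -
  have "det (mat n n (\<lambda>(i,j). \<sigma> i * \<sigma> j * g (i,j)))
     = (\<Sum>p\<in>{p. p permutes {0..<n}}. of_int (sign p) * (\<Prod>i=0..<n. \<sigma> i * \<sigma> (p i) * g (i, p i)))"
    by (simp add: det_mat_explicit)
  also have "\<dots> = (\<Sum>p\<in>{p. p permutes {0..<n}}. (\<Prod>i=0..<n. \<sigma> i)^2 * (of_int (sign p) * (\<Prod>i=0..<n. g (i, p i))))"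
  proof (rule sum.cong[OF refl])
    fix p assume "p \<in> {p. p permutes {0..<n}}"
    then have pp: "p permutes {0..<n}" by simp
    have "(\<Prod>i=0..<n. \<sigma> (p i)) = (\<Prod>i=0..<n. \<sigma> i)"
      using prod.permute[OF pp, of \<sigma>] by (simp add: o_def)
    then show "of_int (sign p) * (\<Prod>i=0..<n. \<sigma> i * \<sigma> (p i) * g (i, p i)) =
       (\<Prod>i=0..<n. \<sigma> i)^2 * (of_int (sign p) * (\<Prod>i=0..<n. g (i, p i)))"
      by (simp add: prod.distrib power2_eq_square algebra_simps)
  qed
  also have "\<dots> = (\<Prod>i=0..<n. \<sigma> i)^2 * det (mat n n g)"
    by (simp add: det_mat_explicit sum_distrib_left)
  finally show ?thesis .
qed

lemma det_perm_sim:
  fixes M :: "'a::comm_ring_1 mat"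
  assumes M: "M \<in> carrier_mat d d" and p: "\<pi> permutes {0..<d}"
  shows "det (mat d d (\<lambda>(i,j). M $$ (\<pi> i, \<pi> j))) = det M"
proof -
  define M1 where "M1 = mat d d (\<lambda>(i,j). M $$ (\<pi> i, j))"
  have M1C: "M1 \<in> carrier_mat d d" by (simp add: M1_def)
  have d1: "det M1 = of_int (sign \<pi>) * det M" unfolding M1_def by (rule det_permute_rows[OF M p])
  define M2 where "M2 = mat d d (\<lambda>(i,j). (transpose_mat M1) $$ (\<pi> i, j))"
  have d2: "det M2 = of_int (sign \<pi>) * det (transpose_mat M1)" unfolding M2_def
    by (rule det_permute_rows[OF _ p]) (simp add: M1C)
  have pi: "\<And>i. i < d \<Longrightarrow> \<pi> i < d" using p permutes_in_image by fastforce
  have "mat d d (\<lambda>(i,j). M $$ (\<pi> i, \<pi> j)) = transpose_mat M2"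
    by (rule eq_matI, auto simp: M2_def M1_def pi)
  moreover have M2C: "M2 \<in> carrier_mat d d" by (simp add: M2_def)
  ultimately have "det (mat d d (\<lambda>(i,j). M $$ (\<pi> i, \<pi> j))) = det M2"
    by (simp add: det_transpose[OF M2C])
  also have "\<dots> = of_int (sign \<pi>) * of_int (sign \<pi>) * det M"
    using d2 d1 det_transpose[OF M1C] by simp
  also have "of_int (sign \<pi>) * of_int (sign \<pi>) = (1::'a)"
    by (simp add: sign_def)
  finally show ?thesis by simp
qed

lemma det2: "det (mat 2 2 f) = f (0,0) * f (1,1) - f (0,1) * f (1,0)"
proof -
  have C: "mat 2 2 f \<in> carrier_mat 2 2" by simp
  have "det (mat 2 2 f) = (\<Sum>j<2. mat 2 2 f $$ (0,j) * cofactor (mat 2 2 f) 0 j)"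
    by (rule laplace_expansion_row[OF C]) simp
  then show ?thesis
    by (simp add: numeral_2_eq_2 cofactor_def mat_delete_def det_single)
qed

lemma det2s: "det (mat (Suc (Suc 0)) (Suc (Suc 0)) f) = f (0,0) * f (1,1) - f (0,1) * f (1,0)"
  using det2[of f] by (simp add: numeral_2_eq_2)

lemma det3: "det (mat 3 3 f) =
   f (0,0) * (f (1,1) * f (2,2) - f (1,2) * f (2,1))
 - f (0,1) * (f (1,0) * f (2,2) - f (1,2) * f (2,0))
 + f (0,2) * (f (1,0) * f (2,1) - f (1,1) * f (2,0))"
proof -
  have C: "mat 3 3 f \<in> carrier_mat 3 3" by simp
  have md: "\<And>j. mat_delete (mat 3 3 f) 0 j = mat 2 2 (\<lambda>(i',j'). f (Suc i', if j' < j then j' else Suc j'))"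
    by (rule eq_matI) (auto simp: mat_delete_def)
  have "det (mat 3 3 f) = (\<Sum>j<3. mat 3 3 f $$ (0,j) * cofactor (mat 3 3 f) 0 j)"
    by (rule laplace_expansion_row[OF C]) simp
  also have "\<dots> = (\<Sum>j<3. f (0,j) * ((-1)^j * det (mat 2 2 (\<lambda>(i',j'). f (Suc i', if j' < j then j' else Suc j')))))"
    by (rule sum.cong, auto simp: cofactor_def md)
  finally show ?thesis
    by (simp add: det2s numeral_3_eq_3 numeral_2_eq_2 algebra_simps)
qed




lemma pderiv_pow_coeff:
  "fact n * coeff ((pderiv ^^ j) (p::real poly)) n = fact (n + j) * coeff p (n + j)"
proof (induction j arbitrary: p n)
  case 0 then show ?case by simp
next
  case (Suc j)
  have "(pderiv ^^ Suc j) p = (pderiv ^^ j) (pderiv p)" by (simp add: funpow_swap1)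
  then have "fact n * coeff ((pderiv ^^ Suc j) p) n = fact (n + j) * coeff (pderiv p) (n + j)"
    using Suc.IH by simp
  also have "\<dots> = fact (n + Suc j) * coeff p (n + Suc j)"
    by (simp add: coeff_pderiv algebra_simps)
  finally show ?case .
qed

lemma pderiv_pow_at0: "poly ((pderiv ^^ j) (p::real poly)) 0 = fact j * coeff p j"
  using pderiv_pow_coeff[of 0 j p] by (simp add: poly_0_coeff_0)

lemma cont_eq_at0:
  fixes f g :: "real \<Rightarrow> real"
  assumes cf: "continuous (at 0) f" and cg: "continuous (at 0) g" and eq: "\<And>s. s \<noteq> 0 \<Longrightarrow> f s = g s"
  shows "f 0 = g 0"
proof -
  have tf: "(f \<longlongrightarrow> f 0) (at 0)" using cf by (simp add: continuous_at)
  have tg: "(g \<longlongrightarrow> g 0) (at 0)" using cg by (simp add: continuous_at)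
  have ev: "eventually (\<lambda>s. g s = f s) (at 0)"
    unfolding eventually_at by (rule exI[of _ 1]) (auto simp: eq)
  have "(f \<longlongrightarrow> g 0) (at 0)" using tendsto_cong[OF ev] tg by simp
  then show ?thesis using tf tendsto_unique[OF at_neq_bot] by blast
qed

lemma lead_minor:
  fixes A :: "real mat"
  assumes AC: "A \<in> carrier_mat d d"
   and idt: "\<And>lam z s. poly (nuij_pert d a (\<Prod>i<d. [:lam i, 1:]) s) z =
        det (z \<cdot>\<^sub>m 1\<^sub>m d + mat d d (\<lambda>(i,j). if i = j then lam i else 0) + s \<cdot>\<^sub>m A)"
   and k1: "1 \<le> k" and kd: "k \<le> d"
  shows "det (mat k k (\<lambda>(i,j). A $$ (i,j))) = a k * fact k"
proof -
  define m where "m i = (if i < k then 0 else 1::real)" for i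
  define q where "q = [:1,1::real:] ^ (d - k)"
  define p where "p = (\<Prod>i<d. [:m i, 1:])"
  have pq: "p = monom 1 k * q"
  proof -
    have "p = (\<Prod>i\<in>{0..<k}. [:m i,1:]) * (\<Prod>i\<in>{k..<d}. [:m i,1:])"
      unfolding p_def lessThan_atLeast0 using prod.atLeastLessThan_concat[of 0 k d "\<lambda>i. [:m i,1:]"] kd by simp
    also have "(\<Prod>i\<in>{0..<k}. [:m i,1:]) = (\<Prod>i\<in>{0..<k}. [:0,1:])"
      by (rule prod.cong) (auto simp: m_def)
    also have "\<dots> = monom 1 k" by (simp add: monom_altdef)
    also have "(\<Prod>i\<in>{k..<d}. [:m i,1:]) = (\<Prod>i\<in>{k..<d}. [:1,1:])"
      by (rule prod.cong) (auto simp: m_def)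
    also have "\<dots> = q" by (simp add: q_def)
    finally show ?thesis .
  qed
  have cq0: "coeff q 0 = 1" by (simp add: q_def poly_0_coeff_0[symmetric])
  have cp: "coeff p j = (if j < k then 0 else coeff q (j - k))" for j
    by (simp add: pq coeff_monom_mult)
  define G where "G i j = (if i < k then A $$ (i,j) else (if i = j then 1 else 0))" for i j
  define H where "H i j = (if i < k then 0 else A $$ (i,j))" for i j
  define B where "B s = mat d d (\<lambda>(i,j). G i j + s * H i j)" for s
  define F where "F s = (\<Sum>j=k..d. a j * fact j * coeff q (j - k) * s^(j-k))" for s
  have key: "det (B s) = F s" if s0: "s \<noteq> 0" for s
  proof -
    have "poly (nuij_pert d a p s) 0 = det (0 \<cdot>\<^sub>m 1\<^sub>m d + mat d d (\<lambda>(i,j). if i = j then m i else 0) + s \<cdot>\<^sub>m A)"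
      unfolding p_def by (rule idt)
    also have "0 \<cdot>\<^sub>m 1\<^sub>m d + mat d d (\<lambda>(i,j). if i = j then m i else 0) + s \<cdot>\<^sub>m A
        = mat\<^sub>r d d (\<lambda>i. (if i < k then s else 1) \<cdot>\<^sub>v row (B s) i)"
      by (rule eq_matI) (use AC in \<open>auto simp: B_def G_def H_def m_def\<close>)
    also have "det \<dots> = prod (\<lambda>i. if i < k then s else 1) {0..<d} * det (mat\<^sub>r d d (\<lambda>i. row (B s) i))"
      by (rule det_rows_mul) (auto simp: B_def)
    also have "mat\<^sub>r d d (\<lambda>i. row (B s) i) = B s" by (rule eq_matI) (auto simp: B_def)
    also have "prod (\<lambda>i. if i < k then s else 1) {0..<d} = s ^ k"
    proof -
      have "prod (\<lambda>i. if i < k then s else 1) {0..<d} = prod (\<lambda>i. if i < k then s else 1) {0..<k} * prod (\<lambda>i. if i < k then s else 1) {k..<d}"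
        using prod.atLeastLessThan_concat[of 0 k d "\<lambda>i. if i < k then s else 1"] kd by simp
      also have "\<dots> = s ^ k" by simp
      finally show ?thesis .
    qed
    finally have L: "poly (nuij_pert d a p s) 0 = s ^ k * det (B s)" .
    have "poly (nuij_pert d a p s) 0 = coeff p 0 + (\<Sum>j=1..d. a j * s ^ j * (fact j * coeff p j))"
      by (simp add: nuij_pert_def poly_sum pderiv_pow_at0 poly_0_coeff_0[of p])
    also have "coeff p 0 = 0" using cp[of 0] k1 by simp
    also have "(\<Sum>j=1..d. a j * s ^ j * (fact j * coeff p j)) = (\<Sum>j=k..d. a j * s ^ j * (fact j * coeff q (j - k)))"
    proof (rule sum.mono_neutral_cong_right)
      show "{k..d} \<subseteq> {1..d}" using k1 by auto
      show "\<forall>j\<in>{1..d} - {k..d}. a j * s ^ j * (fact j * coeff p j) = 0" by (auto simp: cp)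
      show "\<And>j. j \<in> {k..d} \<Longrightarrow> a j * s ^ j * (fact j * coeff p j) = a j * s ^ j * (fact j * coeff q (j - k))"
        by (auto simp: cp)
    qed simp
    also have "\<dots> = s ^ k * F s"
      unfolding F_def sum_distrib_left
    proof (rule sum.cong[OF refl])
      fix j assume "j \<in> {k..d}"
      then have "s ^ j = s ^ k * s ^ (j - k)" by (simp add: power_add[symmetric])
      then show "a j * s ^ j * (fact j * coeff q (j - k)) = s ^ k * (a j * fact j * coeff q (j - k) * s ^ (j - k))"
        by simp
    qed
    finally have "s ^ k * det (B s) = s ^ k * F s" using L by simp
    then show ?thesis using s0 by simp
  qed
  have Bexp: "det (B s) = (\<Sum>p\<in>{p. p permutes {0..<d}}. of_int (sign p) * (\<Prod>i=0..<d. G i (p i) + s * H i (p i)))" for s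
    by (simp add: B_def det_mat_explicit)
  have cB: "continuous (at 0) (\<lambda>s. det (B s))"
    unfolding Bexp by (intro continuous_intros)
  have cF: "continuous (at 0) F"
    unfolding F_def by (intro continuous_intros)
  have "det (B 0) = F 0" by (rule cont_eq_at0[OF cB cF key])
  also have "F 0 = a k * fact k"
  proof -
    have "F 0 = a k * fact k * coeff q 0 * 0 ^ 0 + (\<Sum>j=Suc k..d. a j * fact j * coeff q (j - k) * 0 ^ (j - k))"
      unfolding F_def using kd by (simp add: sum.atLeast_Suc_atMost)
    also have "(\<Sum>j=Suc k..d. a j * fact j * coeff q (j - k) * (0::real) ^ (j - k)) = 0"
      by (rule sum.neutral) auto
    finally show ?thesis using cq0 by simp
  qed
  also have "det (B 0) = det (mat k k (\<lambda>(i,j). A $$ (i,j)))"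
  proof -
    define A11 where "A11 = mat k k (\<lambda>(i,j). A $$ (i,j))"
    define A12 where "A12 = mat k (d-k) (\<lambda>(i,j). A $$ (i, k + j))"
    have "B 0 = four_block_mat A11 A12 (0\<^sub>m (d-k) k) (1\<^sub>m (d-k))"
      by (rule eq_matI) (use kd in \<open>auto simp: B_def G_def H_def A11_def A12_def\<close>)
    moreover have "det (four_block_mat A11 A12 (0\<^sub>m (d-k) k) (1\<^sub>m (d-k))) = det A11 * det (1\<^sub>m (d-k) :: real mat)"
      by (rule det_four_block_mat_lower_left_zero) (auto simp: A11_def A12_def)
    ultimately have "det (B 0) = det A11 * det (1\<^sub>m (d-k) :: real mat)" by simp
    then show ?thesis by (simp add: A11_def)
  qed
  finally show ?thesis by simp
qed




lemma perm3:
  fixes i j l d :: nat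
  assumes "i < d" "j < d" "l < d" "i \<noteq> j" "j \<noteq> l" "i \<noteq> l" "3 \<le> d"
  shows "\<exists>\<pi>. \<pi> permutes {0..<d} \<and> \<pi> 0 = i \<and> \<pi> 1 = j \<and> \<pi> 2 = l"
proof -
  define f where "f = Transposition.transpose 0 i"
  define g where "g = Transposition.transpose 1 (f j)"
  define h where "h = Transposition.transpose 2 (g (f l))"
  have fj: "f j \<noteq> 0" "f j < d" using assms by (auto simp: f_def Transposition.transpose_def)
  have fl: "f l \<noteq> 0" "f l \<noteq> f j" "f l < d" using assms by (auto simp: f_def Transposition.transpose_def)
  have gfl: "g (f l) \<noteq> 0" "g (f l) \<noteq> 1" "g (f l) < d" using fl fj assms
    by (auto simp: g_def Transposition.transpose_def)
  have "f \<circ> g \<circ> h permutes {0..<d}"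
    unfolding f_def g_def h_def using assms fj gfl
    by (intro permutes_compose permutes_swap_id) (auto simp: f_def g_def)
  moreover have "(f \<circ> g \<circ> h) 0 = i" using fj gfl
    by (simp add: f_def g_def h_def Transposition.transpose_def)
  moreover have "(f \<circ> g \<circ> h) 1 = j" using fj gfl assms
    by (simp add: h_def g_def Transposition.transpose_def) (simp add: f_def Transposition.transpose_def)
  moreover have "(f \<circ> g \<circ> h) 2 = l" using fj gfl fl assms
    by (simp add: h_def g_def Transposition.transpose_def) (auto simp: f_def Transposition.transpose_def)
  ultimately show ?thesis by blast
qed

lemma perm2:
  fixes i j d :: nat
  assumes "i < d" "j < d" "i \<noteq> j"
  shows "\<exists>\<pi>. \<pi> permutes {0..<d} \<and> \<pi> 0 = i \<and> \<pi> 1 = j"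
proof -
  have d: "2 \<le> d" using assms by auto
  define f where "f = Transposition.transpose 0 i"
  define g where "g = Transposition.transpose 1 (f j)"
  have fj: "f j \<noteq> 0" "f j < d" using assms by (auto simp: f_def Transposition.transpose_def)
  have "f \<circ> g permutes {0..<d}"
    unfolding f_def g_def using assms fj d
    by (intro permutes_compose permutes_swap_id) (auto simp: f_def)
  moreover have "(f \<circ> g) 0 = i" using fj assms by (simp add: f_def g_def Transposition.transpose_def)
  moreover have "(f \<circ> g) 1 = j" using fj assms
    by (simp add: g_def Transposition.transpose_def) (simp add: f_def Transposition.transpose_def)
  ultimately show ?thesis by blast
qed

lemma perm1:
  fixes i d :: nat
  assumes "i < d"
  shows "\<exists>\<pi>. \<pi> permutes {0..<d} \<and> \<pi> 0 = i"
  using assms by (intro exI[of _ "Transposition.transpose 0 i"]) (auto intro: permutes_swap_id)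

lemma perm_transfer:
  fixes A :: "real mat"
  assumes AC: "A \<in> carrier_mat d d"
   and idt: "\<And>lam z s. poly (nuij_pert d a (\<Prod>i<d. [:lam i, 1:]) s) z =
        det (z \<cdot>\<^sub>m 1\<^sub>m d + mat d d (\<lambda>(i,j). if i = j then lam i else 0) + s \<cdot>\<^sub>m A)"
   and p: "\<pi> permutes {0..<d}"
  shows "poly (nuij_pert d a (\<Prod>i<d. [:lam i, 1:]) s) z =
        det (z \<cdot>\<^sub>m 1\<^sub>m d + mat d d (\<lambda>(i,j). if i = j then lam i else 0) + s \<cdot>\<^sub>m mat d d (\<lambda>(i,j). A $$ (\<pi> i, \<pi> j)))"
proof -
  define mu where "mu i = lam (inv_into UNIV \<pi> i)" for i
  have ip: "inv_into UNIV \<pi> permutes {0..<d}" by (rule permutes_inv[OF p])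
  have "(\<Prod>i<d. [:lam i, 1:]) = (\<Prod>i<d. [:mu i, 1:])"
    unfolding lessThan_atLeast0 mu_def using prod.permute[OF ip, of "\<lambda>i. [:lam i, 1:]"] by (simp add: o_def)
  then have "poly (nuij_pert d a (\<Prod>i<d. [:lam i, 1:]) s) z =
     det (z \<cdot>\<^sub>m 1\<^sub>m d + mat d d (\<lambda>(i,j). if i = j then mu i else 0) + s \<cdot>\<^sub>m A)"
    using idt by simp
  also have "\<dots> = det (mat d d (\<lambda>(i,j). (z \<cdot>\<^sub>m 1\<^sub>m d + mat d d (\<lambda>(i,j). if i = j then mu i else 0) + s \<cdot>\<^sub>m A) $$ (\<pi> i, \<pi> j)))"
    by (rule det_perm_sim[symmetric, OF _ p]) (use AC in auto)
  also have "mat d d (\<lambda>(i,j). (z \<cdot>\<^sub>m 1\<^sub>m d + mat d d (\<lambda>(i,j). if i = j then mu i else 0) + s \<cdot>\<^sub>m A) $$ (\<pi> i, \<pi> j))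
     = z \<cdot>\<^sub>m 1\<^sub>m d + mat d d (\<lambda>(i,j). if i = j then lam i else 0) + s \<cdot>\<^sub>m mat d d (\<lambda>(i,j). A $$ (\<pi> i, \<pi> j))"
  proof (rule eq_matI)
    fix i j assume ij: "i < dim_row (z \<cdot>\<^sub>m 1\<^sub>m d + mat d d (\<lambda>(i,j). if i = j then lam i else 0) + s \<cdot>\<^sub>m mat d d (\<lambda>(i,j). A $$ (\<pi> i, \<pi> j)))"
       "j < dim_col (z \<cdot>\<^sub>m 1\<^sub>m d + mat d d (\<lambda>(i,j). if i = j then lam i else 0) + s \<cdot>\<^sub>m mat d d (\<lambda>(i,j). A $$ (\<pi> i, \<pi> j)))"
    then have ij': "i < d" "j < d" by auto
    have pi: "\<pi> i < d" "\<pi> j < d" using ij' p permutes_in_image by fastforce+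
    have inj: "(\<pi> i = \<pi> j) = (i = j)" using p permutes_inj by (metis injD)
    have mu: "mu (\<pi> i) = lam i" unfolding mu_def using p permutes_inverses(2) by metis
    show "mat d d (\<lambda>(i,j). (z \<cdot>\<^sub>m 1\<^sub>m d + mat d d (\<lambda>(i,j). if i = j then mu i else 0) + s \<cdot>\<^sub>m A) $$ (\<pi> i, \<pi> j)) $$ (i, j) =
      (z \<cdot>\<^sub>m 1\<^sub>m d + mat d d (\<lambda>(i,j). if i = j then lam i else 0) + s \<cdot>\<^sub>m mat d d (\<lambda>(i,j). A $$ (\<pi> i, \<pi> j))) $$ (i, j)"
      using ij' pi AC inj mu by auto
  qed auto
  finally show ?thesis .
qed




lemma minor_perm:
  fixes A :: "real mat"
  assumes AC: "A \<in> carrier_mat d d"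
   and idt: "\<And>lam z s. poly (nuij_pert d a (\<Prod>i<d. [:lam i, 1:]) s) z =
        det (z \<cdot>\<^sub>m 1\<^sub>m d + mat d d (\<lambda>(i,j). if i = j then lam i else 0) + s \<cdot>\<^sub>m A)"
   and p: "\<pi> permutes {0..<d}" and k: "1 \<le> k" "k \<le> d"
  shows "det (mat k k (\<lambda>(r,s). A $$ (\<pi> r, \<pi> s))) = a k * fact k"
proof -
  define A' where "A' = mat d d (\<lambda>(i,j). A $$ (\<pi> i, \<pi> j))"
  have "det (mat k k (\<lambda>(i,j). A' $$ (i,j))) = a k * fact k"
    by (rule lead_minor[OF _ _ k]) (auto simp: A'_def intro: perm_transfer[OF AC idt p])
  moreover have "mat k k (\<lambda>(i,j). A' $$ (i,j)) = mat k k (\<lambda>(r,s). A $$ (\<pi> r, \<pi> s))"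
    by (rule eq_matI) (use k in \<open>auto simp: A'_def\<close>)
  ultimately show ?thesis by simp
qed

lemma tri_alg:
  fixes a1 a2 a3 x y z :: real
  assumes e: "a1 * (a1 * a1 - y * y) - x * (x * a1 - y * z) + z * (x * y - a1 * z) = a3 * 6"
   and q: "x^2 = a1^2 - 2 * a2" "y^2 = a1^2 - 2 * a2" "z^2 = a1^2 - 2 * a2"
  shows "x * y * z = (6 * a3 - a1^3 + 3 * a1 * (a1^2 - 2 * a2)) / 2"
proof -
  have "a1 * (a1 * a1 - y * y) - x * (x * a1 - y * z) + z * (x * y - a1 * z) = a1^3 - a1 * (x^2 + y^2 + z^2) + 2 * (x*y*z)"
    by (simp add: power2_eq_square power3_eq_cube algebra_simps)
  also have "x^2 + y^2 + z^2 = 3 * (a1^2 - 2 * a2)" using q by simp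
  finally show ?thesis using e by (simp add: algebra_simps)
qed

lemma minor_facts:
  fixes A :: "real mat"
  assumes AC: "A \<in> carrier_mat d d" and sym: "transpose_mat A = A"
   and idt: "\<And>lam z s. poly (nuij_pert d a (\<Prod>i<d. [:lam i, 1:]) s) z =
        det (z \<cdot>\<^sub>m 1\<^sub>m d + mat d d (\<lambda>(i,j). if i = j then lam i else 0) + s \<cdot>\<^sub>m A)"
  shows F1: "\<And>i. i < d \<Longrightarrow> A $$ (i,i) = a 1"
    and F2: "\<And>i j. i < d \<Longrightarrow> j < d \<Longrightarrow> i \<noteq> j \<Longrightarrow> (A $$ (i,j))^2 = (a 1)^2 - 2 * a 2"
    and F3: "\<And>i j l. i < d \<Longrightarrow> j < d \<Longrightarrow> l < d \<Longrightarrow> i \<noteq> j \<Longrightarrow> j \<noteq> l \<Longrightarrow> i \<noteq> l \<Longrightarrow>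
        A $$ (i,j) * A $$ (j,l) * A $$ (i,l) = (6 * a 3 - (a 1)^3 + 3 * a 1 * ((a 1)^2 - 2 * a 2)) / 2"
proof -
  have symm: "A $$ (j,i) = A $$ (i,j)" if "i < d" "j < d" for i j
  proof -
    have "transpose_mat A $$ (i,j) = A $$ (j,i)" using that AC by auto
    then show ?thesis using sym by simp
  qed
  show f1: "A $$ (i,i) = a 1" if i: "i < d" for i
  proof -
    obtain \<pi> where p: "\<pi> permutes {0..<d}" "\<pi> 0 = i" using perm1[OF i] by blast
    have "det (mat 1 1 (\<lambda>(r,s). A $$ (\<pi> r, \<pi> s))) = a 1 * fact 1"
      by (rule minor_perm[OF AC idt p(1)]) (use i in auto)
    then show ?thesis using p by (simp add: det_single)
  qed
  show f2: "(A $$ (i,j))^2 = (a 1)^2 - 2 * a 2" if ij: "i < d" "j < d" "i \<noteq> j" for i j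
  proof -
    obtain \<pi> where p: "\<pi> permutes {0..<d}" "\<pi> 0 = i" "\<pi> 1 = j" using perm2[OF ij] by blast
    have "det (mat 2 2 (\<lambda>(r,s). A $$ (\<pi> r, \<pi> s))) = a 2 * fact 2"
      by (rule minor_perm[OF AC idt p(1)]) (use ij in auto)
    then have "A $$ (i,i) * A $$ (j,j) - A $$ (i,j) * A $$ (j,i) = a 2 * 2"
      using p by (simp add: det2)
    then show ?thesis using f1 ij symm[of i j] by (simp add: power2_eq_square)
  qed
  show "A $$ (i,j) * A $$ (j,l) * A $$ (i,l) = (6 * a 3 - (a 1)^3 + 3 * a 1 * ((a 1)^2 - 2 * a 2)) / 2"
    if ijl: "i < d" "j < d" "l < d" "i \<noteq> j" "j \<noteq> l" "i \<noteq> l" for i j l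
  proof -
    have d3: "3 \<le> d" using ijl by auto
    obtain \<pi> where p: "\<pi> permutes {0..<d}" "\<pi> 0 = i" "\<pi> 1 = j" "\<pi> 2 = l" using perm3[OF ijl d3] by blast
    have "det (mat 3 3 (\<lambda>(r,s). A $$ (\<pi> r, \<pi> s))) = a 3 * fact 3"
      by (rule minor_perm[OF AC idt p(1)]) (use d3 in auto)
    then have e: "A $$ (i,i) * (A $$ (j,j) * A $$ (l,l) - A $$ (j,l) * A $$ (l,j))
      - A $$ (i,j) * (A $$ (j,i) * A $$ (l,l) - A $$ (j,l) * A $$ (l,i))
      + A $$ (i,l) * (A $$ (j,i) * A $$ (l,j) - A $$ (j,j) * A $$ (l,i)) = a 3 * 6"
      using p by (simp add: det3 fact_numeral)
    have s: "A $$ (j,i) = A $$ (i,j)" "A $$ (l,j) = A $$ (j,l)" "A $$ (l,i) = A $$ (i,l)"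
      using symm ijl by auto
    have q: "(A $$ (i,j))^2 = (a 1)^2 - 2 * a 2" "(A $$ (j,l))^2 = (a 1)^2 - 2 * a 2" "(A $$ (i,l))^2 = (a 1)^2 - 2 * a 2"
      using f2 ijl by auto
    have dd: "A $$ (i,i) = a 1" "A $$ (j,j) = a 1" "A $$ (l,l) = a 1" using f1 ijl by auto
    show ?thesis by (rule tri_alg[OF e[unfolded s dd] q])
  qed
qed




lemma sign_structure:
  fixes M :: "nat \<Rightarrow> nat \<Rightarrow> real"
  assumes sym: "\<And>i j. i < d \<Longrightarrow> j < d \<Longrightarrow> M j i = M i j"
   and off2: "\<And>i j. i < d \<Longrightarrow> j < d \<Longrightarrow> i \<noteq> j \<Longrightarrow> (M i j)^2 = b2"
   and tri: "\<And>i j l. i < d \<Longrightarrow> j < d \<Longrightarrow> l < d \<Longrightarrow> i \<noteq> j \<Longrightarrow> j \<noteq> l \<Longrightarrow> i \<noteq> l \<Longrightarrow> M i j * M j l * M i l = q"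
  shows "\<exists>\<beta> \<sigma>. (\<forall>i<d. \<sigma> i * \<sigma> i = 1) \<and> (\<forall>i<d. \<forall>j<d. i \<noteq> j \<longrightarrow> M i j = \<sigma> i * \<sigma> j * \<beta>)"
proof (cases "d \<le> 2")
  case True
  show ?thesis
  proof (intro exI[of _ "M 0 1"] exI[of _ "\<lambda>_. 1"] conjI allI impI)
    fix i j assume "i < d" "j < d" "i \<noteq> j"
    then have "(i = 0 \<and> j = 1) \<or> (i = 1 \<and> j = 0)" using True by auto
    then show "M i j = 1 * 1 * M 0 1" using sym[of 0 1] True \<open>i < d\<close> \<open>j < d\<close> by auto
  qed simp
next
  case False
  then have d3: "3 \<le> d" by simp
  show ?thesis
  proof (cases "b2 = 0")
    case True
    show ?thesis
    proof (intro exI[of _ "0"] exI[of _ "\<lambda>_. 1"] conjI allI impI)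
      fix i j assume "i < d" "j < d" "i \<noteq> j"
      then have "(M i j)^2 = 0" using off2 True by simp
      then show "M i j = 1 * 1 * 0" by simp
    qed simp
  next
    case b2: False
    have q0: "q = M 0 1 * M 1 2 * M 0 2" using tri[of 0 1 2] d3 by simp
    have "q^2 = (M 0 1)^2 * (M 1 2)^2 * (M 0 2)^2" unfolding q0 by (simp add: power_mult_distrib)
    also have "\<dots> = b2^3" using off2[of 0 1] off2[of 1 2] off2[of 0 2] d3 by (simp add: power3_eq_cube)
    finally have qq: "q^2 = b2^3" .
    define \<beta> where "\<beta> = q / b2"
    have bb: "\<beta>^2 = b2" unfolding \<beta>_def using qq b2 by (simp add: power_divide power3_eq_cube power2_eq_square)
    have b0: "\<beta> \<noteq> 0" using bb b2 by auto
    define \<sigma> where "\<sigma> i = (if i = 0 then 1 else M 0 i / \<beta>)" for i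
    have M0: "M 0 i = \<sigma> i * \<beta>" if "i \<noteq> 0" for i using that b0 by (simp add: \<sigma>_def)
    have ss: "\<sigma> i * \<sigma> i = 1" if "i < d" for i
    proof (cases "i = 0")
      case True then show ?thesis by (simp add: \<sigma>_def)
    next
      case False
      have "\<sigma> i * \<sigma> i = (M 0 i)^2 / \<beta>^2" using False by (simp add: \<sigma>_def power2_eq_square)
      also have "\<dots> = 1" using off2[of 0 i] False that d3 bb b2 by simp
      finally show ?thesis .
    qed
    show ?thesis
    proof (intro exI[of _ \<beta>] exI[of _ \<sigma>] conjI allI impI)
      fix i assume "i < d" then show "\<sigma> i * \<sigma> i = 1" by (rule ss)
    next
      fix i j assume ij: "i < d" "j < d" "i \<noteq> j"
      show "M i j = \<sigma> i * \<sigma> j * \<beta>"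
      proof (cases "i = 0")
        case True then show ?thesis using ij M0[of j] by (simp add: \<sigma>_def)
      next
        case i0: False
        show ?thesis
        proof (cases "j = 0")
          case True then show ?thesis using ij M0[of i] sym[of j i] i0 by (simp add: \<sigma>_def)
        next
          case j0: False
          have t: "M 0 i * M i j * M 0 j = q" using tri[of 0 i j] ij i0 j0 d3 by simp
          then have "\<sigma> i * \<sigma> j * \<beta>^2 * M i j = q" using M0[OF i0] M0[OF j0]
            by (simp add: power2_eq_square algebra_simps)
          then have "\<sigma> i * \<sigma> j * (\<sigma> i * \<sigma> j) * b2 * M i j = \<sigma> i * \<sigma> j * q" using bb
            by (simp add: algebra_simps)
          then have "b2 * M i j = \<sigma> i * \<sigma> j * q" using ss[OF ij(1)] ss[OF ij(2)]
            by (simp add: algebra_simps)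
          then have "M i j = \<sigma> i * \<sigma> j * (q / b2)" using b2 by (simp add: field_simps)
          then show ?thesis by (simp add: \<beta>_def)
        qed
      qed
    qed
  qed
qed

lemma forward:
  assumes "univ_det_rep d a"
  shows "\<exists>\<alpha> \<beta> :: real. \<forall>i\<in>{1..d}.
            a i = t_ab \<alpha> \<beta> i / fact i \<and>
            a i = (\<alpha> - \<beta>) ^ (i - 1) * (\<alpha> + (real i - 1) * \<beta>) / fact i"
proof -
  obtain A where AC: "A \<in> carrier_mat d d" and sym: "transpose_mat A = A"
    and idt: "\<And>lam z s. poly (nuij_pert d a (\<Prod>i<d. [:lam i, 1:]) s) z =
        det (z \<cdot>\<^sub>m 1\<^sub>m d + mat d d (\<lambda>(i,j). if i = j then lam i else 0) + s \<cdot>\<^sub>m A)"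
    using assms unfolding univ_det_rep_def by blast
  note F = minor_facts[OF AC sym idt]
  have symm: "A $$ (j,i) = A $$ (i,j)" if "i < d" "j < d" for i j
  proof -
    have "transpose_mat A $$ (i,j) = A $$ (j,i)" using that AC by auto
    then show ?thesis using sym by simp
  qed
  obtain \<beta> \<sigma> where ss: "\<forall>i<d. \<sigma> i * \<sigma> i = (1::real)"
    and st: "\<forall>i<d. \<forall>j<d. i \<noteq> j \<longrightarrow> A $$ (i,j) = \<sigma> i * \<sigma> j * \<beta>"
    using sign_structure[of d "\<lambda>i j. A $$ (i,j)", OF symm F(2) F(3)] by blast
  define \<alpha> where "\<alpha> = a 1"
  have main: "a k = t_ab \<alpha> \<beta> k / fact k" if k: "k \<in> {1..d}" for k
  proof -
    have "det (mat k k (\<lambda>(i,j). A $$ (i,j))) = a k * fact k"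
      by (rule lead_minor[OF AC idt]) (use k in auto)
    moreover have "mat k k (\<lambda>(i,j). A $$ (i,j)) = mat k k (\<lambda>(i,j). \<sigma> i * \<sigma> j * (\<lambda>(i,j). if i = j then \<alpha> else \<beta>) (i,j))"
    proof (rule eq_matI)
      fix i j assume "i < dim_row (mat k k (\<lambda>(i,j). \<sigma> i * \<sigma> j * (\<lambda>(i,j). if i = j then \<alpha> else \<beta>) (i,j)))"
        "j < dim_col (mat k k (\<lambda>(i,j). \<sigma> i * \<sigma> j * (\<lambda>(i,j). if i = j then \<alpha> else \<beta>) (i,j)))"
      then have ij: "i < d" "j < d" "i < k" "j < k" using k by auto
      show "mat k k (\<lambda>(i,j). A $$ (i,j)) $$ (i,j) = mat k k (\<lambda>(i,j). \<sigma> i * \<sigma> j * (\<lambda>(i,j). if i = j then \<alpha> else \<beta>) (i,j)) $$ (i,j)"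
        using ij ss st F(1)[of i] by (auto simp: \<alpha>_def)
    qed auto
    moreover have "det (mat k k (\<lambda>(i,j). \<sigma> i * \<sigma> j * (\<lambda>(i,j). if i = j then \<alpha> else \<beta>) (i,j)))
       = (\<Prod>i=0..<k. \<sigma> i)^2 * t_ab \<alpha> \<beta> k"
      unfolding t_ab_def by (rule det_sign_scale)
    moreover have "(\<Prod>i=0..<k. \<sigma> i)^2 = 1"
    proof -
      have "(\<Prod>i=0..<k. \<sigma> i)^2 = (\<Prod>i=0..<k. \<sigma> i * \<sigma> i)" by (simp add: power2_eq_square prod.distrib)
      also have "\<dots> = 1" using ss k by (intro prod.neutral) auto
      finally show ?thesis .
    qed
    ultimately have "a k * fact k = t_ab \<alpha> \<beta> k" by simp
    then show ?thesis by (simp add: field_simps)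
  qed
  have "\<forall>i\<in>{1..d}. a i = t_ab \<alpha> \<beta> i / fact i \<and>
            a i = (\<alpha> - \<beta>) ^ (i - 1) * (\<alpha> + (real i - 1) * \<beta>) / fact i"
  proof
    fix i assume i: "i \<in> {1..d}"
    have "t_ab \<alpha> \<beta> i = (\<alpha> - \<beta>) ^ (i - 1) * (\<alpha> + (real i - 1) * \<beta>)"
      using t_ab_closed i by simp
    then show "a i = t_ab \<alpha> \<beta> i / fact i \<and>
            a i = (\<alpha> - \<beta>) ^ (i - 1) * (\<alpha> + (real i - 1) * \<beta>) / fact i"
      using main[OF i] by simp
  qed
  then show ?thesis by blast
qed

theorem theoremB:
  fixes d :: nat and a :: "nat \<Rightarrow> real"
  shows "(nuij_seq d a \<and> univ_det_rep d a) \<longleftrightarrow>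
         (\<exists>\<alpha> \<beta> :: real. \<forall>i\<in>{1..d}.
            a i = t_ab \<alpha> \<beta> i / fact i \<and>
            a i = (\<alpha> - \<beta>) ^ (i - 1) * (\<alpha> + (real i - 1) * \<beta>) / fact i)"
proof
  assume "nuij_seq d a \<and> univ_det_rep d a"
  then show "\<exists>\<alpha> \<beta> :: real. \<forall>i\<in>{1..d}.
            a i = t_ab \<alpha> \<beta> i / fact i \<and>
            a i = (\<alpha> - \<beta>) ^ (i - 1) * (\<alpha> + (real i - 1) * \<beta>) / fact i"
    using forward by blast
next
  assume "\<exists>\<alpha> \<beta> :: real. \<forall>i\<in>{1..d}.
            a i = t_ab \<alpha> \<beta> i / fact i \<and>
            a i = (\<alpha> - \<beta>) ^ (i - 1) * (\<alpha> + (real i - 1) * \<beta>) / fact i"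
  then obtain \<alpha> \<beta> :: real where "\<forall>i\<in>{1..d}. a i = (\<alpha> - \<beta>) ^ (i - 1) * (\<alpha> + (real i - 1) * \<beta>) / fact i"
    by blast
  then show "nuij_seq d a \<and> univ_det_rep d a" by (rule backward)
qed


end
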